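(* Let $G=K_{r_1,\dots,r_k}$ with $|V(G)|$ odd and partition sets $X_1,\dots,X_k$, and let $H$ be a good bisection of $G$ with partition sets $V_1,V_2$ such that $|V_1|=|V_2|+1$. Let $\mathcal X_0'$ be the set of those $X_i$ that cross $H$, have $|X_i|$ even, and satisfy $\big||X_i\cap V_1|-|X_i\cap V_2|\big|=2$; let $\mathcal X_1$ be the set of those $X_i$ that cross $H$ and have $|X_i|$ odd. Let $W_1=\bigcup_{X_i\in\mathcal X_1}X_i$, $W_0=\bigcup_{X_i\in\mathcal X_0'}X_i$, $t=|\mathcal X_1|$, $t'=|\mathcal X_0'|$. Then (i) $|W_1\cap V_1|-|W_1\cap V_2|=t$; (ii) $|W_0\cap V_1|-|W_0\cap V_2|=2t'$; (iii) $|\overline{W_1\cup W_0}\cap V_1|-|\overline{W_1\cup W_0}\cap V_2|=-(t+2t'-1)$.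
   Context: A bisection of a graph $G$ is a bipartite spanning subgraph $H$ of $G$ with partition sets $V_1,V_2$ (every edge of $H$ joins $V_1$ and $V_2$) with $||V_1|-|V_2||\le 1$. It is good if $2d_H(v)\ge d_G(v)-1$ for every $v\in V(G)$. For $W\subseteq V(G)$, $\overline{W}=V(G)\setminus W$. A partition set $X_i$ crosses $H$ if $X_i\cap V_1\neq\emptyset$ and $X_i\cap V_2\ne\emptyset$. *)

theory Defs
  imports Main
begin

definition simple_graph :: "'a set \<Rightarrow> ('a \<Rightarrow> 'a \<Rightarrow> bool) \<Rightarrow> bool" where
  "simple_graph V E \<longleftrightarrow> finite V \<and>
     (\<forall>u v. E u v \<longrightarrow> u \<in> V \<and> v \<in> V \<and> u \<noteq> v \<and> E v u)"

definition degree :: "'a set \<Rightarrow> ('a \<Rightarrow> 'a \<Rightarrow> bool) \<Rightarrow> 'a \<Rightarrow> nat" where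
  "degree V E v = card {u \<in> V. E v u}"

definition complete_multipartite ::
  "'a set \<Rightarrow> ('a \<Rightarrow> 'a \<Rightarrow> bool) \<Rightarrow> nat \<Rightarrow> (nat \<Rightarrow> 'a set) \<Rightarrow> bool" where
  "complete_multipartite V E k X \<longleftrightarrow> finite V \<and>
     V = (\<Union>i<k. X i) \<and>
     (\<forall>i<k. X i \<noteq> {}) \<and>
     (\<forall>i<k. \<forall>j<k. i \<noteq> j \<longrightarrow> X i \<inter> X j = {}) \<and>
     (\<forall>u v. E u v \<longleftrightarrow> (\<exists>i<k. \<exists>j<k. i \<noteq> j \<and> u \<in> X i \<and> v \<in> X j))"

definition bisection ::
  "'a set \<Rightarrow> ('a \<Rightarrow> 'a \<Rightarrow> bool) \<Rightarrow> ('a \<Rightarrow> 'a \<Rightarrow> bool) \<Rightarrow> 'a set \<Rightarrow> 'a set \<Rightarrow> bool" where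
  "bisection V E EH V1 V2 \<longleftrightarrow>
     simple_graph V EH \<and> (\<forall>u v. EH u v \<longrightarrow> E u v) \<and>
     V1 \<union> V2 = V \<and> V1 \<inter> V2 = {} \<and>
     (\<forall>u v. EH u v \<longrightarrow> (u \<in> V1 \<and> v \<in> V2) \<or> (u \<in> V2 \<and> v \<in> V1)) \<and>
     \<bar>int (card V1) - int (card V2)\<bar> \<le> 1"

definition good_bisection ::
  "'a set \<Rightarrow> ('a \<Rightarrow> 'a \<Rightarrow> bool) \<Rightarrow> ('a \<Rightarrow> 'a \<Rightarrow> bool) \<Rightarrow> 'a set \<Rightarrow> 'a set \<Rightarrow> bool" where
  "good_bisection V E EH V1 V2 \<longleftrightarrow> bisection V E EH V1 V2 \<and>
     (\<forall>v\<in>V. 2 * int (degree V EH v) \<ge> int (degree V E v) - 1)"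

definition crosses :: "'a set \<Rightarrow> 'a set \<Rightarrow> 'a set \<Rightarrow> bool" where
  "crosses Xi V1 V2 \<longleftrightarrow> Xi \<inter> V1 \<noteq> {} \<and> Xi \<inter> V2 \<noteq> {}"

end

theory Submission
  imports Defs
begin

lemma nbr_E:
  assumes G: "complete_multipartite V E k X" and i: "i < k" and v: "v \<in> X i"
  shows "{u \<in> V. E v u} = V - X i"
proof -
  have disj: "\<And>j. j < k \<Longrightarrow> v \<in> X j \<Longrightarrow> j = i"
    using G i v unfolding complete_multipartite_def by blast
  have VU: "V = (\<Union>j<k. X j)" and Ed: "\<And>u w. E u w \<longleftrightarrow> (\<exists>i<k. \<exists>j<k. i \<noteq> j \<and> u \<in> X i \<and> w \<in> X j)"
    using G unfolding complete_multipartite_def by blast+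
  show ?thesis
  proof (intro set_eqI iffI)
    fix u assume "u \<in> {u \<in> V. E v u}"
    then obtain a b where "a<k" "b<k" "a\<noteq>b" "v \<in> X a" "u \<in> X b" "u \<in> V" using Ed by blast
    moreover have "X a \<inter> X b = {}" using G calculation unfolding complete_multipartite_def by blast
    ultimately show "u \<in> V - X i" using disj by blast
  next
    fix u assume u: "u \<in> V - X i"
    then obtain b where "b<k" "u \<in> X b" using VU by blast
    moreover have "b \<noteq> i" using u calculation by blast
    ultimately show "u \<in> {u \<in> V. E v u}" using Ed i v u by blast
  qed
qed

lemma part_bound:
  assumes G: "complete_multipartite V E k X"
    and H: "good_bisection V E EH V1 V2"
    and sizes: "card V1 = card V2 + 1"
    and i: "i < k" and cr: "crosses (X i) V1 V2"
  shows "card (X i \<inter> V2) \<le> card (X i \<inter> V1) \<and> card (X i \<inter> V1) \<le> card (X i \<inter> V2) + 2"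
proof -
  have fV: "finite V" using G unfolding complete_multipartite_def by blast
  have XV: "X i \<subseteq> V" using G i unfolding complete_multipartite_def by blast
  have B: "bisection V E EH V1 V2" and gd: "\<forall>v\<in>V. 2 * int (degree V EH v) \<ge> int (degree V E v) - 1"
    using H unfolding good_bisection_def by blast+
  have U: "V1 \<union> V2 = V" and D: "V1 \<inter> V2 = {}" and sub: "\<And>u v. EH u v \<Longrightarrow> E u v"
    and side: "\<And>u v. EH u v \<Longrightarrow> (u \<in> V1 \<and> v \<in> V2) \<or> (u \<in> V2 \<and> v \<in> V1)"
    using B unfolding bisection_def by blast+
  have f1: "finite V1" "finite V2" using fV U by (metis finite_Un)+
  have cV: "card V = card V1 + card V2" using card_Un_disjoint[OF f1 D] U by simp
  have fX: "finite (X i)" using fV XV finite_subset by blast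
  have XU: "X i = (X i \<inter> V1) \<union> (X i \<inter> V2)" using XV U by blast
  have cX: "card (X i) = card (X i \<inter> V1) + card (X i \<inter> V2)"
    using card_Un_disjoint[of "X i \<inter> V1" "X i \<inter> V2"] fX D XU by (metis Int_Un_distrib2 Int_absorb2 Int_assoc inf_bot_right inf_commute finite_Int XV)
  have cXle: "card (X i) \<le> card V" using card_mono[OF fV XV] .
  have degE: "\<And>v. v \<in> X i \<Longrightarrow> degree V E v = card V - card (X i)"
    unfolding degree_def using nbr_E[OF G i] card_Diff_subset[OF fX XV] by simp
  have a: "card (X i \<inter> V2) \<le> card (X i \<inter> V1)"
  proof -
    obtain v where v: "v \<in> X i \<inter> V1" using cr unfolding crosses_def by blast
    have "{u \<in> V. EH v u} \<subseteq> V2 - X i"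
    proof
      fix u assume u: "u \<in> {u \<in> V. EH v u}"
      hence "u \<in> V2" using side[of v u] v D by blast
      moreover have "u \<in> V - X i" using u sub nbr_E[OF G i, of v] v by blast
      ultimately show "u \<in> V2 - X i" by blast
    qed
    hence "degree V EH v \<le> card (V2 - X i)" unfolding degree_def using f1 by (simp add: card_mono)
    also have "\<dots> = card V2 - card (X i \<inter> V2)"
      using card_Diff_subset_Int[of "V2" "X i"] f1 by (simp add: Int_commute)
    finally have "degree V EH v \<le> card V2 - card (X i \<inter> V2)" .
    moreover have "2 * int (degree V EH v) \<ge> int (degree V E v) - 1" using gd v XV by blast
    moreover have "card (X i \<inter> V2) \<le> card V2" using f1 by (simp add: card_mono)
    moreover have "degree V E v = card V - card (X i)" using degE v by blast
    ultimately show ?thesis using cV cX cXle sizes by linarith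
  qed
  have b: "card (X i \<inter> V1) \<le> card (X i \<inter> V2) + 2"
  proof -
    obtain v where v: "v \<in> X i \<inter> V2" using cr unfolding crosses_def by blast
    have "{u \<in> V. EH v u} \<subseteq> V1 - X i"
    proof
      fix u assume u: "u \<in> {u \<in> V. EH v u}"
      hence "u \<in> V1" using side[of v u] v D by blast
      moreover have "u \<in> V - X i" using u sub nbr_E[OF G i, of v] v by blast
      ultimately show "u \<in> V1 - X i" by blast
    qed
    hence "degree V EH v \<le> card (V1 - X i)" unfolding degree_def using f1 by (simp add: card_mono)
    also have "\<dots> = card V1 - card (X i \<inter> V1)"
      using card_Diff_subset_Int[of "V1" "X i"] f1 by (simp add: Int_commute)
    finally have "degree V EH v \<le> card V1 - card (X i \<inter> V1)" .
    moreover have "2 * int (degree V EH v) \<ge> int (degree V E v) - 1" using gd v XV by blast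
    moreover have "card (X i \<inter> V1) \<le> card V1" using f1 by (simp add: card_mono)
    moreover have "degree V E v = card V - card (X i)" using degE v by blast
    ultimately show ?thesis using cV cX cXle sizes by linarith
  qed
  show ?thesis using a b by blast
qed


lemma card_UN_part:
  assumes G: "complete_multipartite V E k X" and I: "I \<subseteq> {..<k}"
  shows "card ((\<Union>i\<in>I. X i) \<inter> A) = (\<Sum>i\<in>I. card (X i \<inter> A))"
proof -
  have fV: "finite V" using G unfolding complete_multipartite_def by blast
  have XV: "\<And>i. i<k \<Longrightarrow> X i \<subseteq> V" using G unfolding complete_multipartite_def by blast
  have dj: "\<And>i j. i<k \<Longrightarrow> j<k \<Longrightarrow> i\<noteq>j \<Longrightarrow> X i \<inter> X j = {}" using G unfolding complete_multipartite_def by blast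
  have fI: "finite I" using finite_subset[OF I] by simp
  have "(\<Union>i\<in>I. X i) \<inter> A = (\<Union>i\<in>I. X i \<inter> A)" by blast
  also have "card \<dots> = (\<Sum>i\<in>I. card (X i \<inter> A))"
  proof (rule card_UN_disjoint[OF fI])
    show "\<forall>i\<in>I. finite (X i \<inter> A)"
    proof
      fix i assume "i \<in> I" hence "X i \<subseteq> V" using I XV by blast
      thus "finite (X i \<inter> A)" using fV by (meson finite_Int finite_subset)
    qed
    show "\<forall>i\<in>I. \<forall>j\<in>I. i \<noteq> j \<longrightarrow> X i \<inter> A \<inter> (X j \<inter> A) = {}" using I dj by blast
  qed
  finally show ?thesis .
qed

lemma diffsum:
  assumes G: "complete_multipartite V E k X" and I: "I \<subseteq> {..<k}"
    and c: "\<And>i. i \<in> I \<Longrightarrow> int (card (X i \<inter> A)) - int (card (X i \<inter> B)) = c"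
  shows "int (card ((\<Union>i\<in>I. X i) \<inter> A)) - int (card ((\<Union>i\<in>I. X i) \<inter> B)) = c * int (card I)"
proof -
  have "int (card ((\<Union>i\<in>I. X i) \<inter> A)) - int (card ((\<Union>i\<in>I. X i) \<inter> B))
     = (\<Sum>i\<in>I. int (card (X i \<inter> A)) - int (card (X i \<inter> B)))"
    using card_UN_part[OF G I, of A] card_UN_part[OF G I, of B] by (simp add: sum_subtractf)
  also have "\<dots> = (\<Sum>i\<in>I. c)" by (rule sum.cong) (use c in auto)
  finally show ?thesis by simp
qed

theorem lemma3p2:
  fixes V :: "'a set" and E EH :: "'a \<Rightarrow> 'a \<Rightarrow> bool"
    and k :: nat and X :: "nat \<Rightarrow> 'a set" and V1 V2 :: "'a set"
  assumes G: "complete_multipartite V E k X"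
    and odd_V: "odd (card V)"
    and H: "good_bisection V E EH V1 V2"
    and sizes: "card V1 = card V2 + 1"
  defines "W1 \<equiv> (\<Union>i\<in>{i. i < k \<and> crosses (X i) V1 V2 \<and> odd (card (X i))}. X i)"
    and "W0 \<equiv> (\<Union>i\<in>{i. i < k \<and> crosses (X i) V1 V2 \<and> even (card (X i)) \<and>
                  \<bar>int (card (X i \<inter> V1)) - int (card (X i \<inter> V2))\<bar> = 2}. X i)"
    and "t \<equiv> card {i. i < k \<and> crosses (X i) V1 V2 \<and> odd (card (X i))}"
    and "t' \<equiv> card {i. i < k \<and> crosses (X i) V1 V2 \<and> even (card (X i)) \<and>
                  \<bar>int (card (X i \<inter> V1)) - int (card (X i \<inter> V2))\<bar> = 2}"
  shows "int (card (W1 \<inter> V1)) - int (card (W1 \<inter> V2)) = int t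
     \<and> int (card (W0 \<inter> V1)) - int (card (W0 \<inter> V2)) = 2 * int t'
     \<and> int (card ((V - (W1 \<union> W0)) \<inter> V1)) - int (card ((V - (W1 \<union> W0)) \<inter> V2))
           = - (int t + 2 * int t' - 1)"
proof -
  define I1 where "I1 = {i. i < k \<and> crosses (X i) V1 V2 \<and> odd (card (X i))}"
  define I0 where "I0 = {i. i < k \<and> crosses (X i) V1 V2 \<and> even (card (X i)) \<and>
                  \<bar>int (card (X i \<inter> V1)) - int (card (X i \<inter> V2))\<bar> = 2}"
  have fV: "finite V" using G unfolding complete_multipartite_def by blast
  have XV: "\<And>i. i<k \<Longrightarrow> X i \<subseteq> V" using G unfolding complete_multipartite_def by blast
  have dj: "\<And>i j. i<k \<Longrightarrow> j<k \<Longrightarrow> i\<noteq>j \<Longrightarrow> X i \<inter> X j = {}" using G unfolding complete_multipartite_def by blast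
  have B: "bisection V E EH V1 V2" using H unfolding good_bisection_def by blast
  have U: "V1 \<union> V2 = V" and D: "V1 \<inter> V2 = {}" using B unfolding bisection_def by blast+
  have f1: "finite V1" "finite V2" using fV U by (metis finite_Un)+
  have cX: "\<And>i. i<k \<Longrightarrow> card (X i) = card (X i \<inter> V1) + card (X i \<inter> V2)"
  proof -
    fix i assume i: "i<k"
    have "X i = (X i \<inter> V1) \<union> (X i \<inter> V2)" using XV[OF i] U by blast
    moreover have "finite (X i)" using XV[OF i] fV finite_subset by blast
    moreover have "card ((X i \<inter> V1) \<union> (X i \<inter> V2)) = card (X i \<inter> V1) + card (X i \<inter> V2)"
      by (rule card_Un_disjoint) (use calculation D in auto)
    ultimately show "card (X i) = card (X i \<inter> V1) + card (X i \<inter> V2)" by simp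
  qed
  have I1k: "I1 \<subseteq> {..<k}" and I0k: "I0 \<subseteq> {..<k}" unfolding I1_def I0_def by auto
  have r1: "int (card (W1 \<inter> V1)) - int (card (W1 \<inter> V2)) = int t"
  proof -
    have "int (card (W1 \<inter> V1)) - int (card (W1 \<inter> V2)) = 1 * int (card I1)"
      unfolding W1_def I1_def[symmetric]
    proof (rule diffsum[OF G I1k])
      fix i assume i: "i \<in> I1"
      hence "i<k" "crosses (X i) V1 V2" "odd (card (X i))" unfolding I1_def by auto
      have pb: "card (X i \<inter> V2) \<le> card (X i \<inter> V1) \<and> card (X i \<inter> V1) \<le> card (X i \<inter> V2) + 2"
        using part_bound[OF G H sizes] \<open>i<k\<close> \<open>crosses (X i) V1 V2\<close> by blast
      have "odd (card (X i \<inter> V1) + card (X i \<inter> V2))" using cX[OF \<open>i<k\<close>] \<open>odd (card (X i))\<close> by simp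
      hence "card (X i \<inter> V1) = card (X i \<inter> V2) + 1" using pb by presburger
      thus "int (card (X i \<inter> V1)) - int (card (X i \<inter> V2)) = 1" by simp
    qed
    thus ?thesis unfolding t_def I1_def by simp
  qed
  have r0: "int (card (W0 \<inter> V1)) - int (card (W0 \<inter> V2)) = 2 * int t'"
  proof -
    have "int (card (W0 \<inter> V1)) - int (card (W0 \<inter> V2)) = 2 * int (card I0)"
      unfolding W0_def I0_def[symmetric]
    proof (rule diffsum[OF G I0k])
      fix i assume i: "i \<in> I0"
      hence "i<k" "crosses (X i) V1 V2" "\<bar>int (card (X i \<inter> V1)) - int (card (X i \<inter> V2))\<bar> = 2" unfolding I0_def by auto
      moreover have "card (X i \<inter> V2) \<le> card (X i \<inter> V1)"
        using part_bound[OF G H sizes] \<open>i<k\<close> \<open>crosses (X i) V1 V2\<close> by blast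
      ultimately show "int (card (X i \<inter> V1)) - int (card (X i \<inter> V2)) = 2" by linarith
    qed
    thus ?thesis unfolding t'_def I0_def by simp
  qed
  have W1I: "W1 = (\<Union>i\<in>I1. X i)" unfolding W1_def I1_def by (rule refl)
  have W0I: "W0 = (\<Union>i\<in>I0. X i)" unfolding W0_def I0_def by (rule refl)
  have W10: "W1 \<inter> W0 = {}"
  proof (rule ccontr)
    assume "W1 \<inter> W0 \<noteq> {}"
    then obtain x where "x \<in> W1" "x \<in> W0" by blast
    then obtain i j where ij: "i \<in> I1" "j \<in> I0" "x \<in> X i" "x \<in> X j" unfolding W1I W0I by blast
    hence "i<k" "j<k" "odd (card (X i))" "even (card (X j))" unfolding I1_def I0_def by auto
    hence "i \<noteq> j" by auto
    thus False using dj[OF \<open>i<k\<close> \<open>j<k\<close>] ij by blast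
  qed
  have WV: "W1 \<subseteq> V" "W0 \<subseteq> V" unfolding W1I W0I using XV I1k I0k by blast+
  define S where "S = V - (W1 \<union> W0)"
  have split: "\<And>A. A \<subseteq> V \<Longrightarrow> card A = card (W1 \<inter> A) + card (W0 \<inter> A) + card (S \<inter> A)"
  proof -
    fix A assume A: "A \<subseteq> V"
    have fA: "finite A" using A fV finite_subset by blast
    have "A = ((W1 \<inter> A) \<union> (W0 \<inter> A)) \<union> (S \<inter> A)" using A unfolding S_def by blast
    moreover have "card ((W1 \<inter> A) \<union> (W0 \<inter> A)) = card (W1 \<inter> A) + card (W0 \<inter> A)"
      by (rule card_Un_disjoint) (use fA W10 in auto)
    moreover have "card (((W1 \<inter> A) \<union> (W0 \<inter> A)) \<union> (S \<inter> A)) = card ((W1 \<inter> A) \<union> (W0 \<inter> A)) + card (S \<inter> A)"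
      by (rule card_Un_disjoint) (use fA in \<open>unfold S_def, auto\<close>)
    ultimately show "card A = card (W1 \<inter> A) + card (W0 \<inter> A) + card (S \<inter> A)" by simp
  qed
  have "card V1 = card (W1 \<inter> V1) + card (W0 \<inter> V1) + card (S \<inter> V1)" using split U by blast
  moreover have "card V2 = card (W1 \<inter> V2) + card (W0 \<inter> V2) + card (S \<inter> V2)" using split U by blast
  ultimately have r2: "int (card (S \<inter> V1)) - int (card (S \<inter> V2)) = - (int t + 2 * int t' - 1)"
    using r1 r0 sizes by linarith
  show ?thesis using r1 r0 r2 unfolding S_def by blast
qed

end
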